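(* The map $P:\mu^{-1}(0)^{rss}\to\{(x_1,\dots,x_n,y_1,\dots,y_n)\in\mathbb{C}^{2n}: x_\iota\ne x_\gamma\text{ for }\iota\ne\gamma\}$, $(r,s,i,j)\mapsto(r_{11},\dots,r_{nn},s'_{11},\dots,s'_{nn})$ with $s'_{\iota\iota}=\operatorname{tr}(L^\iota(r)s)$, is a well-defined regular, $B$-invariant, surjective map that separates orbit closures (points of $\mu^{-1}(0)^{rss}$ whose $B$-orbit closures in $\mu^{-1}(0)^{rss}$ are disjoint have distinct images).
   Context: $B\subset GL_n(\mathbb{C})$ is the group of invertible upper triangular matrices, $\mathfrak{b}$ the upper triangular matrices, $\mathfrak{n}^+$ the strictly upper triangular matrices, $\mathfrak{b}^*=\mathfrak{gl}_n/\mathfrak{n}^+$, $(\mathbb{C}^n)^*$ row vectors. $B$ acts on $T^*(\mathfrak{b}\times\mathbb{C}^n)=\mathfrak{b}\times\mathfrak{b}^*\times\mathbb{C}^n\times(\mathbb{C}^n)^*$ by $b\cdot(r,s,i,j)=(brb^{-1},bsb^{-1},bi,jb^{-1})$, with moment map $\mu(r,s,i,j)=[r,s]+ij \bmod\mathfrak{n}^+\in\mathfrak{b}^*$. $\mu^{-1}(0)^{rss}$ is the set of $(r,s,i,j)\in\mu^{-1}(0)$ such that $r$ has pairwise distinct eigenvalues (diagonal entries). For such $r$ put $l_k(r)=r-r_{kk}I$ and $L^\iota(r)=\big[\operatorname{tr}\prod_{k\ne\iota}l_k(r)\big]^{-1}\prod_{k\ne\iota}l_k(r)$, an upper triangular matrix;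 $\operatorname{tr}(L^\iota(r)s)$ is well defined for $s\in\mathfrak{gl}_n/\mathfrak{n}^+$. *)

theory Defs
  imports Complex_Main "Jordan_Normal_Form.Matrix"
begin

text \<open>Points of T*(b x C^n) are quadruples (r,s,i,j) of complex matrices:
 r upper triangular n x n, s a lower triangular n x n matrix representing its class
 in gl_n / n^+ (canonical representative), i a column n x 1, j a row 1 x n.\<close>

type_synonym pt = "complex mat \<times> complex mat \<times> complex mat \<times> complex mat"

definition mtrace :: "complex mat \<Rightarrow> complex" where
  "mtrace A = (\<Sum>k<dim_row A. A $$ (k,k))"

definition lower_part :: "nat \<Rightarrow> complex mat \<Rightarrow> complex mat" where
  "lower_part n A = mat n n (\<lambda>(a,b). if b \<le> a then A $$ (a,b) else 0)"

definition ambient :: "nat \<Rightarrow> pt set" where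
  "ambient n = {(r,s,i,j). r \<in> carrier_mat n n \<and> upper_triangular r
      \<and> s \<in> carrier_mat n n \<and> (\<forall>a<n. \<forall>b<n. a < b \<longrightarrow> s $$ (a,b) = 0)
      \<and> i \<in> carrier_mat n 1 \<and> j \<in> carrier_mat 1 n}"

text \<open>moment map [r,s] + ij modulo n^+ (as lower triangular representative)\<close>
definition moment :: "nat \<Rightarrow> pt \<Rightarrow> complex mat" where
  "moment n x = (case x of (r,s,i,j) \<Rightarrow> lower_part n (r * s - s * r + i * j))"

definition mu0_rss :: "nat \<Rightarrow> pt set" where
  "mu0_rss n = {x \<in> ambient n. moment n x = 0\<^sub>m n n \<and>
      (case x of (r,s,i,j) \<Rightarrow> (\<forall>a<n. \<forall>b<n. a \<noteq> b \<longrightarrow> r $$ (a,a) \<noteq> r $$ (b,b)))}"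

definition Borel :: "nat \<Rightarrow> complex mat set" where
  "Borel n = {b \<in> carrier_mat n n. upper_triangular b \<and> invertible_mat b}"

definition act :: "nat \<Rightarrow> complex mat \<Rightarrow> complex mat \<Rightarrow> pt \<Rightarrow> pt" where
  "act n b binv x = (case x of (r,s,i,j) \<Rightarrow>
      (b * r * binv, lower_part n (b * s * binv), b * i, j * binv))"

definition orbit :: "nat \<Rightarrow> pt \<Rightarrow> pt set" where
  "orbit n x = {act n b binv x | b binv. b \<in> Borel n \<and> binv \<in> carrier_mat n n
       \<and> b * binv = 1\<^sub>m n}"

inductive_set poly_fun :: "nat \<Rightarrow> (pt \<Rightarrow> complex) set" for n where
  const: "(\<lambda>_. c) \<in> poly_fun n"
| coord_r: "a < n \<Longrightarrow> b < n \<Longrightarrow> (\<lambda>(r,s,i,j). r $$ (a,b)) \<in> poly_fun n"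
| coord_s: "a < n \<Longrightarrow> b < n \<Longrightarrow> (\<lambda>(r,s,i,j). s $$ (a,b)) \<in> poly_fun n"
| coord_i: "a < n \<Longrightarrow> (\<lambda>(r,s,i,j). i $$ (a,0)) \<in> poly_fun n"
| coord_j: "b < n \<Longrightarrow> (\<lambda>(r,s,i,j). j $$ (0,b)) \<in> poly_fun n"
| add: "f \<in> poly_fun n \<Longrightarrow> g \<in> poly_fun n \<Longrightarrow> (\<lambda>x. f x + g x) \<in> poly_fun n"
| mult: "f \<in> poly_fun n \<Longrightarrow> g \<in> poly_fun n \<Longrightarrow> (\<lambda>x. f x * g x) \<in> poly_fun n"

text \<open>regular function on the (principal open subset of an affine variety) X:
  globally a quotient of polynomials with denominator nonvanishing on X\<close>
definition regular_on :: "nat \<Rightarrow> pt set \<Rightarrow> (pt \<Rightarrow> complex) \<Rightarrow> bool" where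
  "regular_on n X f \<longleftrightarrow> (\<exists>p\<in>poly_fun n. \<exists>q\<in>poly_fun n.
      \<forall>x\<in>X. q x \<noteq> 0 \<and> f x = p x / q x)"

definition zclosure_in :: "nat \<Rightarrow> pt set \<Rightarrow> pt set \<Rightarrow> pt set" where
  "zclosure_in n X S = {x \<in> X. \<forall>p\<in>poly_fun n. (\<forall>y\<in>S. p y = 0) \<longrightarrow> p x = 0}"

definition lfac :: "nat \<Rightarrow> complex mat \<Rightarrow> nat \<Rightarrow> complex mat" where
  "lfac n r k = r - r $$ (k,k) \<cdot>\<^sub>m 1\<^sub>m n"

definition prod_l :: "nat \<Rightarrow> complex mat \<Rightarrow> nat \<Rightarrow> complex mat" where
  "prod_l n r \<iota> = foldr (\<lambda>k M. lfac n r k * M) (filter (\<lambda>k. k \<noteq> \<iota>) [0..<n]) (1\<^sub>m n)"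

definition Lmat :: "nat \<Rightarrow> complex mat \<Rightarrow> nat \<Rightarrow> complex mat" where
  "Lmat n r \<iota> = inverse (mtrace (prod_l n r \<iota>)) \<cdot>\<^sub>m prod_l n r \<iota>"

definition Pmap :: "nat \<Rightarrow> pt \<Rightarrow> complex list \<times> complex list" where
  "Pmap n x = (case x of (r,s,i,j) \<Rightarrow>
     (map (\<lambda>k. r $$ (k,k)) [0..<n], map (\<lambda>k. mtrace (Lmat n r k * s)) [0..<n]))"

definition target :: "nat \<Rightarrow> (complex list \<times> complex list) set" where
  "target n = {(xs,ys). length xs = n \<and> length ys = n \<and> distinct xs}"

end

theory Submission
  imports Defs "Jordan_Normal_Form.Determinant"
begin

lemma sum_single: "finite S \<Longrightarrow> a \<in> S \<Longrightarrow> (\<And>c. c\<in>S \<Longrightarrow> c \<noteq> a \<Longrightarrow> f c = 0) \<Longrightarrow> sum f S = (f a :: complex)"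
  by (subst sum.remove[of S a]) (auto intro!: sum.neutral)

lemma mult_entry: "A \<in> carrier_mat n m \<Longrightarrow> B \<in> carrier_mat m k \<Longrightarrow> a < n \<Longrightarrow> b < k \<Longrightarrow>
  (A * B) $$ (a,b) = (\<Sum>c<m. A $$ (a,c) * B $$ (c,b))"
  by (auto simp: scalar_prod_def lessThan_atLeast0 intro!: sum.cong)

definition ut :: "nat \<Rightarrow> complex mat \<Rightarrow> bool" where
  "ut n A \<longleftrightarrow> A \<in> carrier_mat n n \<and> (\<forall>a<n. \<forall>b<a. A $$ (a,b) = 0)"

definition su :: "nat \<Rightarrow> complex mat \<Rightarrow> bool" where
  "su n A \<longleftrightarrow> A \<in> carrier_mat n n \<and> (\<forall>a<n. \<forall>b\<le>a. A $$ (a,b) = 0)"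

lemma ut_iff: "ut n A \<longleftrightarrow> A \<in> carrier_mat n n \<and> upper_triangular A"
  unfolding ut_def upper_triangular_def by auto

lemma ut_mult: assumes "ut n A" "ut n B" shows "ut n (A * B)"
  "\<And>a. a < n \<Longrightarrow> (A * B) $$ (a,a) = A $$ (a,a) * B $$ (a,a)"
proof -
  have c: "A \<in> carrier_mat n n" "B \<in> carrier_mat n n" using assms unfolding ut_def by auto
  show "ut n (A * B)" unfolding ut_def
  proof (intro conjI allI impI)
    fix a b assume ab: "a < n" "b < a"
    have "(A*B) $$ (a,b) = (\<Sum>c<n. A $$ (a,c) * B $$ (c,b))" by (rule mult_entry[OF c(1) c(2)]) (use ab in auto)
    also have "\<dots> = 0"
    proof (rule sum.neutral, intro ballI)
      fix c assume "c \<in> {..<n}"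
      then show "A $$ (a,c) * B $$ (c,b) = 0" using assms ab unfolding ut_def
        by (cases "c < a") auto
    qed
    finally show "(A*B) $$ (a,b) = 0" .
  qed (use c in auto)
  fix a assume a: "a < n"
  have "(A*B) $$ (a,a) = (\<Sum>c<n. A $$ (a,c) * B $$ (c,a))" by (rule mult_entry[OF c(1) c(2)]) (use a in auto)
  also have "\<dots> = A $$ (a,a) * B $$ (a,a)"
  proof (rule sum_single)
    fix c assume "c \<in> {..<n}" "c \<noteq> a"
    then show "A $$ (a,c) * B $$ (c,a) = 0" using assms a unfolding ut_def
      by (cases "c < a") auto
  qed (use a in auto)
  finally show "(A * B) $$ (a,a) = A $$ (a,a) * B $$ (a,a)" .
qed

lemma su_mult1: assumes "ut n A" "su n B" shows "su n (A * B)"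
proof -
  have c: "A \<in> carrier_mat n n" "B \<in> carrier_mat n n" using assms unfolding ut_def su_def by auto
  show ?thesis unfolding su_def
  proof (intro conjI allI impI)
    fix a b assume ab: "a < n" "b \<le> a"
    have "(A*B) $$ (a,b) = (\<Sum>c<n. A $$ (a,c) * B $$ (c,b))" by (rule mult_entry[OF c(1) c(2)]) (use ab in auto)
    also have "\<dots> = 0"
    proof (rule sum.neutral, intro ballI)
      fix c assume "c \<in> {..<n}"
      then show "A $$ (a,c) * B $$ (c,b) = 0" using assms ab unfolding ut_def su_def
        by (cases "c < a") auto
    qed
    finally show "(A*B) $$ (a,b) = 0" .
  qed (use c in auto)
qed

lemma su_mult2: assumes "su n A" "ut n B" shows "su n (A * B)"
proof -
  have c: "A \<in> carrier_mat n n" "B \<in> carrier_mat n n" using assms unfolding ut_def su_def by auto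
  show ?thesis unfolding su_def
  proof (intro conjI allI impI)
    fix a b assume ab: "a < n" "b \<le> a"
    have "(A*B) $$ (a,b) = (\<Sum>c<n. A $$ (a,c) * B $$ (c,b))" by (rule mult_entry[OF c(1) c(2)]) (use ab in auto)
    also have "\<dots> = 0"
    proof (rule sum.neutral, intro ballI)
      fix c assume "c \<in> {..<n}"
      then show "A $$ (a,c) * B $$ (c,b) = 0" using assms ab unfolding ut_def su_def
        by (cases "c \<le> a") auto
    qed
    finally show "(A*B) $$ (a,b) = 0" .
  qed (use c in auto)
qed

lemma lp_carrier[simp]: "lower_part n M \<in> carrier_mat n n"
  unfolding lower_part_def by auto
lemma lp_dim[simp]: "dim_row (lower_part n M) = n" "dim_col (lower_part n M) = n"
  unfolding lower_part_def by auto
lemma lp_entry[simp]: "a < n \<Longrightarrow> b < n \<Longrightarrow> lower_part n M $$ (a,b) = (if b \<le> a then M $$ (a,b) else 0)"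
  unfolding lower_part_def by auto

lemma lp_eqI: assumes "\<And>a b. a < n \<Longrightarrow> b \<le> a \<Longrightarrow> X $$ (a,b) = Y $$ (a,b)"
  shows "lower_part n X = lower_part n Y"
  by (rule eq_matI) (use assms in auto)

lemma lp_add: "A \<in> carrier_mat n n \<Longrightarrow> B \<in> carrier_mat n n \<Longrightarrow> lower_part n (A + B) = lower_part n A + lower_part n B"
  by (rule eq_matI) auto
lemma lp_minus: "A \<in> carrier_mat n n \<Longrightarrow> B \<in> carrier_mat n n \<Longrightarrow> lower_part n (A - B) = lower_part n A - lower_part n B"
  by (rule eq_matI) auto

lemma LP1: assumes "ut n U" "M \<in> carrier_mat n n"
  shows "lower_part n (U * lower_part n M) = lower_part n (U * M)"
proof (rule lp_eqI)
  fix a b assume ab: "a < n" "b \<le> a"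
  have c: "U \<in> carrier_mat n n" using assms unfolding ut_def by auto
  have "(U * lower_part n M) $$ (a,b) = (\<Sum>c<n. U $$ (a,c) * lower_part n M $$ (c,b))"
    by (rule mult_entry[OF c]) (use ab in auto)
  also have "\<dots> = (\<Sum>c<n. U $$ (a,c) * M $$ (c,b))"
  proof (rule sum.cong)
    fix c assume "c \<in> {..<n}"
    then show "U $$ (a,c) * lower_part n M $$ (c,b) = U $$ (a,c) * M $$ (c,b)"
      using assms ab unfolding ut_def by (cases "c < a") auto
  qed simp
  also have "\<dots> = (U * M) $$ (a,b)"
    by (rule mult_entry[OF c assms(2), symmetric]) (use ab in auto)
  finally show "(U * lower_part n M) $$ (a,b) = (U * M) $$ (a,b)" .
qed

lemma LP2: assumes "ut n U" "M \<in> carrier_mat n n"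
  shows "lower_part n (lower_part n M * U) = lower_part n (M * U)"
proof (rule lp_eqI)
  fix a b assume ab: "a < n" "b \<le> a"
  have c: "U \<in> carrier_mat n n" using assms unfolding ut_def by auto
  have "(lower_part n M * U) $$ (a,b) = (\<Sum>c<n. lower_part n M $$ (a,c) * U $$ (c,b))"
    by (rule mult_entry[OF _ c]) (use ab in auto)
  also have "\<dots> = (\<Sum>c<n. M $$ (a,c) * U $$ (c,b))"
  proof (rule sum.cong)
    fix c assume "c \<in> {..<n}"
    then show "lower_part n M $$ (a,c) * U $$ (c,b) = M $$ (a,c) * U $$ (c,b)"
      using assms ab unfolding ut_def by (cases "b < c") auto
  qed simp
  also have "\<dots> = (M * U) $$ (a,b)"
    by (rule mult_entry[OF assms(2) c, symmetric]) (use ab in auto)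
  finally show "(lower_part n M * U) $$ (a,b) = (M * U) $$ (a,b)" .
qed

lemma LP3: assumes "ut n U" "ut n V" "M \<in> carrier_mat n n"
  shows "lower_part n (U * lower_part n M * V) = lower_part n (U * M * V)"
proof -
  have c: "U \<in> carrier_mat n n" "V \<in> carrier_mat n n" using assms unfolding ut_def by auto
  have "lower_part n (U * lower_part n M * V) = lower_part n (lower_part n (U * lower_part n M) * V)"
    by (rule LP2[symmetric]) (use assms c in auto)
  also have "\<dots> = lower_part n (lower_part n (U * M) * V)" using LP1[OF assms(1,3)] by simp
  also have "\<dots> = lower_part n (U * M * V)" 
    by (rule LP2) (use assms c in auto)
  finally show ?thesis .
qed

lemma prod_list_upt: "prod_list (map f [0..<n]) = (\<Prod>a<n. f a :: complex)"
  by (induct n) auto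

lemma det_ut: "ut n A \<Longrightarrow> det A = (\<Prod>a<n. A $$ (a,a))"
  unfolding ut_iff
  by (subst det_upper_triangular[of _ n]) (auto simp: diag_mat_def prod_list_upt)

lemma ut_inverse: assumes A: "ut n A" and W: "W \<in> carrier_mat n n" and AW: "A * W = 1\<^sub>m n"
  shows "ut n W" "\<And>a. a < n \<Longrightarrow> A $$ (a,a) \<noteq> 0"
proof -
  have cA: "A \<in> carrier_mat n n" using A unfolding ut_def by auto
  have "det A * det W = 1" using det_mult[OF cA W] AW by simp
  then have "det A \<noteq> 0" by auto
  then show nz: "\<And>a. a < n \<Longrightarrow> A $$ (a,a) \<noteq> 0" using det_ut[OF A] by auto
  have main: "\<forall>b<a. W $$ (a,b) = 0" if "a < n" for a
    using that
  proof (induct "n - a" arbitrary: a rule: less_induct)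
    case (less a)
    show ?case
    proof (intro allI impI)
      fix b assume b: "b < a"
      have "0 = (A * W) $$ (a,b)" using AW less b by simp
      also have "\<dots> = (\<Sum>c<n. A $$ (a,c) * W $$ (c,b))"
        by (rule mult_entry[OF cA W]) (use less b in auto)
      also have "\<dots> = A $$ (a,a) * W $$ (a,b)"
      proof (rule sum_single)
        fix c assume c: "c \<in> {..<n}" "c \<noteq> a"
        show "A $$ (a,c) * W $$ (c,b) = 0"
        proof (cases "c < a")
          case True then show ?thesis using A less unfolding ut_def by auto
        next
          case False
          then have "n - c < n - a" "c < n" using c less by auto
          then show ?thesis using less(1)[of c] b False c by auto
        qed
      qed (use less in auto)
      finally show "W $$ (a,b) = 0" using nz[OF less(2)] by simp
    qed
  qed
  show "ut n W" unfolding ut_def using W main by auto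
qed

lemma lfac_dim[simp]: "dim_row (lfac n r k) = n" "dim_col (lfac n r k) = n"
  unfolding lfac_def by auto
lemma lfac_carrier[simp]: "lfac n r k \<in> carrier_mat n n"
  unfolding carrier_mat_def by auto
lemma lfac_entry: "r \<in> carrier_mat n n \<Longrightarrow> a < n \<Longrightarrow> b < n \<Longrightarrow>
   lfac n r k $$ (a,b) = r $$ (a,b) - (if a = b then r $$ (k,k) else 0)"
  unfolding lfac_def by auto
lemma lfac_ut: "ut n r \<Longrightarrow> ut n (lfac n r k)"
  unfolding ut_def by (auto simp: lfac_entry)

lemma lfac_mult_left: assumes r: "r \<in> carrier_mat n n" and M: "M \<in> carrier_mat n n" and ab: "a < n" "b < n"
  shows "(lfac n r k * M) $$ (a,b) = (r * M) $$ (a,b) - r $$ (k,k) * M $$ (a,b)"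
proof -
  have "(lfac n r k * M) $$ (a,b) = (\<Sum>c<n. lfac n r k $$ (a,c) * M $$ (c,b))"
    by (rule mult_entry[OF lfac_carrier M ab])
  also have "\<dots> = (\<Sum>c<n. r $$ (a,c) * M $$ (c,b) - (if a = c then r $$ (k,k) * M $$ (a,b) else 0))"
    by (rule sum.cong) (auto simp: lfac_entry r ab algebra_simps)
  also have "\<dots> = (r * M) $$ (a,b) - r $$ (k,k) * M $$ (a,b)"
    by (simp add: sum_subtractf mult_entry[OF r M ab] ab)
  finally show ?thesis .
qed

lemma lfac_mult_right: assumes r: "r \<in> carrier_mat n n" and M: "M \<in> carrier_mat n n" and ab: "a < n" "b < n"
  shows "(M * lfac n r k) $$ (a,b) = (M * r) $$ (a,b) - r $$ (k,k) * M $$ (a,b)"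
proof -
  have "(M * lfac n r k) $$ (a,b) = (\<Sum>c<n. M $$ (a,c) * lfac n r k $$ (c,b))"
    by (rule mult_entry[OF M lfac_carrier ab])
  also have "\<dots> = (\<Sum>c<n. M $$ (a,c) * r $$ (c,b) - (if b = c then r $$ (k,k) * M $$ (a,b) else 0))"
    by (rule sum.cong) (auto simp: lfac_entry r ab algebra_simps)
  also have "\<dots> = (M * r) $$ (a,b) - r $$ (k,k) * M $$ (a,b)"
    by (simp add: sum_subtractf mult_entry[OF M r ab] ab)
  finally show ?thesis .
qed

lemma lfac_comm: assumes r: "r \<in> carrier_mat n n" and M: "M \<in> carrier_mat n n" and rM: "r * M = M * r"
  shows "lfac n r k * M = M * lfac n r k"
proof (rule eq_matI, goal_cases)
  case (1 a b)
  then have ab: "a < n" "b < n" using M by auto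
  show ?case unfolding lfac_mult_left[OF r M ab] lfac_mult_right[OF r M ab] rM ..
qed (use M in auto)

lemma lfac_comm_r: assumes r: "r \<in> carrier_mat n n"
  shows "r * lfac n r k = lfac n r k * r"
  using lfac_comm[OF r r refl] by simp

definition FL :: "nat \<Rightarrow> complex mat \<Rightarrow> nat list \<Rightarrow> complex mat" where
  "FL n r ks = foldr (\<lambda>k M. lfac n r k * M) ks (1\<^sub>m n)"

lemma FL_simps: "FL n r [] = 1\<^sub>m n" "FL n r (k # ks) = lfac n r k * FL n r ks"
  unfolding FL_def by auto

lemma FL_dim[simp]: "dim_row (FL n r ks) = n" "dim_col (FL n r ks) = n"
  by (induct ks) (auto simp: FL_simps)
lemma FL_carrier[simp]: "FL n r ks \<in> carrier_mat n n"
  unfolding carrier_mat_def by auto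

lemma prod_l_FL: "prod_l n r i = FL n r (filter (\<lambda>k. k \<noteq> i) [0..<n])"
  unfolding prod_l_def FL_def ..

lemma FL_append: assumes r: "r \<in> carrier_mat n n"
  shows "FL n r (xs @ ys) = FL n r xs * FL n r ys"
proof (induct xs)
  case Nil then show ?case using r left_mult_one_mat[OF FL_carrier] by (simp add: FL_simps)
next
  case (Cons x xs)
  have "FL n r ((x # xs) @ ys) = lfac n r x * (FL n r xs * FL n r ys)" using Cons by (simp add: FL_simps)
  also have "\<dots> = lfac n r x * FL n r xs * FL n r ys"
    by (rule assoc_mult_mat[symmetric, of _ n n _ n _ n]) (use r in auto)
  finally show ?case by (simp add: FL_simps)
qed

lemma FL_ut: "ut n r \<Longrightarrow> ut n (FL n r ks) \<and> (\<forall>a<n. FL n r ks $$ (a,a) = (\<Prod>k\<leftarrow>ks. r $$ (a,a) - r $$ (k,k)))"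
proof (induct ks)
  case Nil then show ?case by (auto simp: FL_simps ut_def)
next
  case (Cons k ks)
  have r: "r \<in> carrier_mat n n" using Cons unfolding ut_def by auto
  from Cons have IH: "ut n (FL n r ks)" "\<forall>a<n. FL n r ks $$ (a,a) = (\<Prod>k\<leftarrow>ks. r $$ (a,a) - r $$ (k,k))" by auto
  have l: "ut n (lfac n r k)" by (rule lfac_ut[OF Cons(2)])
  show ?case using ut_mult[OF l IH(1)] IH(2) by (auto simp: FL_simps lfac_entry r)
qed

lemma FL_comm_r: assumes r: "r \<in> carrier_mat n n"
  shows "r * FL n r ks = FL n r ks * r"
proof (induct ks)
  case Nil then show ?case using r by (simp add: FL_simps)
next
  case (Cons k ks)
  have "r * FL n r (k # ks) = (r * lfac n r k) * FL n r ks"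
    using r by (simp add: FL_simps assoc_mult_mat[of r n n _ n _ n])
  also have "\<dots> = lfac n r k * (r * FL n r ks)" using r by (simp add: lfac_comm_r[OF r] assoc_mult_mat[of _ n n _ n _ n])
  also have "\<dots> = lfac n r k * FL n r ks * r" using r by (simp add: Cons assoc_mult_mat[of _ n n _ n _ n])
  finally show ?case by (simp add: FL_simps)
qed

lemma FL_upt_zero: assumes r: "ut n r"
  shows "\<forall>a<n. \<forall>b<m. b < n \<longrightarrow> FL n r [0..<m] $$ (a,b) = 0"
proof (induct m)
  case 0 then show ?case by simp
next
  case (Suc m)
  have rc: "r \<in> carrier_mat n n" using r unfolding ut_def by auto
  have e: "FL n r [0..<Suc m] = FL n r [0..<m] * lfac n r m"
    using FL_append[OF rc, of "[0..<m]" "[m]"] rc right_mult_one_mat[OF lfac_carrier] by (simp add: FL_simps)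
  show ?case
  proof (intro allI impI)
    fix a b assume ab: "a < n" "b < Suc m" "b < n"
    have "FL n r [0..<Suc m] $$ (a,b) = (\<Sum>c<n. FL n r [0..<m] $$ (a,c) * lfac n r m $$ (c,b))"
      unfolding e by (rule mult_entry[of _ n n _ n]) (use rc ab in auto)
    also have "\<dots> = 0"
    proof (rule sum.neutral, intro ballI)
      fix c assume c: "c \<in> {..<n}"
      show "FL n r [0..<m] $$ (a,c) * lfac n r m $$ (c,b) = 0"
      proof (cases "c < m")
        case True then show ?thesis using Suc ab c by auto
      next
        case False
        then have "b < c \<or> (b = c \<and> c = m)" using ab by auto
        then show ?thesis using r c ab unfolding ut_def by (auto simp: lfac_entry)
      qed
    qed
    finally show "FL n r [0..<Suc m] $$ (a,b) = 0" .
  qed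
qed

lemma CH: assumes r: "ut n r" and i: "i < n"
  shows "lfac n r i * prod_l n r i = 0\<^sub>m n n"
proof -
  have rc: "r \<in> carrier_mat n n" using r unfolding ut_def by auto
  have "[0..<n] = [0..<i] @ [i..<n]" using upt_add_eq_append[of 0 i "n-i"] i by simp
  then have split: "[0..<n] = [0..<i] @ i # [Suc i..<n]"
    using upt_conv_Cons[OF i] by simp
  have f: "filter (\<lambda>k. k \<noteq> i) [0..<n] = [0..<i] @ [Suc i..<n]"
    unfolding split by (auto intro!: filter_True)
  let ?A = "FL n r [0..<i]" and ?B = "FL n r [Suc i..<n]" and ?l = "lfac n r i"
  have c: "?A \<in> carrier_mat n n" "?B \<in> carrier_mat n n" "?l \<in> carrier_mat n n" using rc by auto
  have "?l * prod_l n r i = ?l * (?A * ?B)" unfolding prod_l_FL f FL_append[OF rc] ..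
  also have "\<dots> = (?l * ?A) * ?B" using c by (simp add: assoc_mult_mat[of _ n n _ n _ n])
  also have "\<dots> = (?A * ?l) * ?B" using lfac_comm[OF rc c(1) FL_comm_r[OF rc]] by simp
  also have "\<dots> = ?A * (?l * ?B)" using c by (simp add: assoc_mult_mat[of _ n n _ n _ n])
  also have "\<dots> = FL n r [0..<n]" unfolding split FL_append[OF rc] FL_simps ..
  also have "\<dots> = 0\<^sub>m n n"
    by (rule eq_matI) (use FL_upt_zero[OF r, of n] rc in auto)
  finally show ?thesis .
qed

definition dmat :: "nat \<Rightarrow> (nat \<Rightarrow> complex) \<Rightarrow> complex mat" where
  "dmat n f = mat n n (\<lambda>(a,b). if a = b then f a else 0)"

lemma dmat_carrier[simp]: "dmat n f \<in> carrier_mat n n" and dmat_dim[simp]: "dim_row (dmat n f) = n" "dim_col (dmat n f) = n"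
  unfolding dmat_def by auto
lemma dmat_entry[simp]: "a < n \<Longrightarrow> b < n \<Longrightarrow> dmat n f $$ (a,b) = (if a = b then f a else 0)"
  unfolding dmat_def by auto

lemma mult_dmat_right: assumes M: "M \<in> carrier_mat m n" and ab: "a < m" "b < n"
  shows "(M * dmat n f) $$ (a,b) = M $$ (a,b) * f b"
proof -
  have "(M * dmat n f) $$ (a,b) = (\<Sum>c<n. M $$ (a,c) * dmat n f $$ (c,b))"
    by (rule mult_entry[OF M dmat_carrier ab])
  also have "\<dots> = M $$ (a,b) * f b"
    by (subst sum_single[where a=b]) (use ab in auto)
  finally show ?thesis .
qed

lemma mult_dmat_left: assumes M: "M \<in> carrier_mat n m" and ab: "a < n" "b < m"
  shows "(dmat n f * M) $$ (a,b) = f a * M $$ (a,b)"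
proof -
  have "(dmat n f * M) $$ (a,b) = (\<Sum>c<n. dmat n f $$ (a,c) * M $$ (c,b))"
    by (rule mult_entry[OF dmat_carrier M ab])
  also have "\<dots> = f a * M $$ (a,b)"
    by (subst sum_single[where a=a]) (use ab in auto)
  finally show ?thesis .
qed

lemma mtrace_carrier: "A \<in> carrier_mat n n \<Longrightarrow> mtrace A = (\<Sum>a<n. A $$ (a,a))"
  unfolding mtrace_def by auto

lemma prod_l_carrier[simp]: "prod_l n r i \<in> carrier_mat n n"
  unfolding prod_l_FL by simp

definition distinct_diag :: "nat \<Rightarrow> complex mat \<Rightarrow> bool" where
  "distinct_diag n r \<longleftrightarrow> (\<forall>a<n. \<forall>b<n. a \<noteq> b \<longrightarrow> r $$ (a,a) \<noteq> r $$ (b,b))"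

lemma prod_l_ut: "ut n r \<Longrightarrow> ut n (prod_l n r i)"
  unfolding prod_l_FL using FL_ut by blast

lemma prod_l_diag: assumes r: "ut n r" and d: "distinct_diag n r" and i: "i < n" and a: "a < n"
  shows "(prod_l n r i $$ (a,a) = 0) \<longleftrightarrow> a \<noteq> i"
proof -
  have e: "prod_l n r i $$ (a,a) = (\<Prod>k\<leftarrow>filter (\<lambda>k. k \<noteq> i) [0..<n]. r $$ (a,a) - r $$ (k,k))"
    unfolding prod_l_FL using FL_ut[OF r] a by blast
  show ?thesis
  proof (cases "a = i")
    case True
    then show ?thesis unfolding e using d a unfolding distinct_diag_def by (auto simp: prod_list_zero_iff)
  next
    case False
    then show ?thesis unfolding e using a by (auto simp: prod_list_zero_iff intro!: bexI[of _ a])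
  qed
qed

lemma trace_prod_l: assumes r: "ut n r" and d: "distinct_diag n r" and i: "i < n"
  shows "mtrace (prod_l n r i) = prod_l n r i $$ (i,i)" "mtrace (prod_l n r i) \<noteq> 0"
proof -
  show e: "mtrace (prod_l n r i) = prod_l n r i $$ (i,i)"
    unfolding mtrace_carrier[OF prod_l_carrier]
    by (rule sum_single) (use prod_l_diag[OF r d i] i in auto)
  show "mtrace (prod_l n r i) \<noteq> 0" unfolding e using prod_l_diag[OF r d i i] by auto
qed

lemma Lmat_carrier[simp]: "Lmat n r i \<in> carrier_mat n n"
  unfolding Lmat_def by simp

lemma Lmat_entry: "a < n \<Longrightarrow> b < n \<Longrightarrow> Lmat n r i $$ (a,b) = inverse (mtrace (prod_l n r i)) * prod_l n r i $$ (a,b)"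
  unfolding Lmat_def by (simp add: prod_l_FL)

lemma r_prod_l: assumes r: "ut n r" and i: "i < n" and ab: "a < n" "b < n"
  shows "(r * prod_l n r i) $$ (a,b) = r $$ (i,i) * prod_l n r i $$ (a,b)"
proof -
  have rc: "r \<in> carrier_mat n n" using r unfolding ut_def by auto
  have "0 = (lfac n r i * prod_l n r i) $$ (a,b)" using CH[OF r i] ab by simp
  also have "\<dots> = (r * prod_l n r i) $$ (a,b) - r $$ (i,i) * prod_l n r i $$ (a,b)"
    by (rule lfac_mult_left[OF rc prod_l_carrier ab])
  finally show ?thesis by simp
qed

lemma diagonalize: assumes r: "ut n r" and d: "distinct_diag n r"
  shows "\<exists>W V. W \<in> Borel n \<and> ut n W \<and> ut n V \<and> W * V = 1\<^sub>m n \<and> V * W = 1\<^sub>m n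
     \<and> W * r * V = dmat n (\<lambda>k. r $$ (k,k))"
proof -
  have rc: "r \<in> carrier_mat n n" using r unfolding ut_def by auto
  define V where "V = mat n n (\<lambda>(a,k). Lmat n r k $$ (a,k))"
  have Vc: "V \<in> carrier_mat n n" unfolding V_def by auto
  have Ve: "V $$ (a,k) = Lmat n r k $$ (a,k)" if "a < n" "k < n" for a k
    unfolding V_def using that by auto
  have Vut: "ut n V" unfolding ut_def
  proof (intro conjI allI impI Vc)
    fix a k assume "a < n" "k < a"
    then show "V $$ (a,k) = 0" using Ve prod_l_ut[OF r, of k] unfolding ut_def by (auto simp: Lmat_entry)
  qed
  have Vd: "V $$ (k,k) = 1" if "k < n" for k
    using that Ve trace_prod_l[OF r d that] by (auto simp: Lmat_entry)
  have "det V = 1" unfolding det_ut[OF Vut] using Vd by simp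
  then have "V \<in> Units (ring_mat TYPE(complex) n ())" by (intro det_non_zero_imp_unit[OF Vc]) auto
  then obtain W where Wc: "W \<in> carrier_mat n n" and WV: "W * V = 1\<^sub>m n" and VW: "V * W = 1\<^sub>m n"
    unfolding Units_def ring_mat_def by auto
  have Wut: "ut n W" using ut_inverse(1)[OF Vut Wc VW] .
  have rV: "r * V = V * dmat n (\<lambda>k. r $$ (k,k))"
  proof (rule eq_matI)
    fix a k assume "a < dim_row (V * dmat n (\<lambda>k. r $$ (k,k)))" "k < dim_col (V * dmat n (\<lambda>k. r $$ (k,k)))"
    then have ak: "a < n" "k < n" using Vc by auto
    have "(r * V) $$ (a,k) = (\<Sum>c<n. r $$ (a,c) * V $$ (c,k))" by (rule mult_entry[OF rc Vc ak])
    also have "\<dots> = inverse (mtrace (prod_l n r k)) * (\<Sum>c<n. r $$ (a,c) * prod_l n r k $$ (c,k))"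
      by (simp add: sum_distrib_left Ve ak Lmat_entry algebra_simps)
    also have "\<dots> = inverse (mtrace (prod_l n r k)) * (r * prod_l n r k) $$ (a,k)"
      by (subst mult_entry[OF rc prod_l_carrier ak]) simp
    also have "\<dots> = V $$ (a,k) * r $$ (k,k)"
      using r_prod_l[OF r ak(2) ak] by (simp add: Ve ak Lmat_entry)
    also have "\<dots> = (V * dmat n (\<lambda>k. r $$ (k,k))) $$ (a,k)"
      by (rule mult_dmat_right[OF Vc ak, symmetric])
    finally show "(r * V) $$ (a,k) = (V * dmat n (\<lambda>k. r $$ (k,k))) $$ (a,k)" .
  qed (use Vc rc in auto)
  have "W * r * V = W * (r * V)" using Wc rc Vc by (simp add: assoc_mult_mat[of _ n n _ n _ n])
  also have "\<dots> = (W * V) * dmat n (\<lambda>k. r $$ (k,k))" unfolding rV using Wc Vc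
    by (simp add: assoc_mult_mat[of _ n n _ n _ n])
  also have "\<dots> = dmat n (\<lambda>k. r $$ (k,k))" unfolding WV by simp
  finally have WrV: "W * r * V = dmat n (\<lambda>k. r $$ (k,k))" .
  have "W \<in> Borel n" unfolding Borel_def invertible_mat_def inverts_mat_def square_mat.simps
    using Wc Wut WV VW Vc ut_iff by (auto intro!: exI[of _ V])
  then show ?thesis using Wut Vut WV VW WrV by blast
qed

lemma mtrace_comm: assumes A: "A \<in> carrier_mat n n" and B: "B \<in> carrier_mat n n"
  shows "mtrace (A * B) = mtrace (B * A)"
proof -
  have "mtrace (A * B) = (\<Sum>a<n. \<Sum>c<n. A $$ (a,c) * B $$ (c,a))"
    unfolding mtrace_carrier[OF mult_carrier_mat[OF A B]] by (rule sum.cong) (auto simp: mult_entry[OF A B])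
  also have "\<dots> = (\<Sum>c<n. \<Sum>a<n. B $$ (c,a) * A $$ (a,c))"
    by (subst sum.swap) (simp add: mult.commute)
  also have "\<dots> = mtrace (B * A)"
    unfolding mtrace_carrier[OF mult_carrier_mat[OF B A]] by (rule sum.cong) (auto simp: mult_entry[OF B A])
  finally show ?thesis .
qed

lemma mtrace_smult: "A \<in> carrier_mat n n \<Longrightarrow> mtrace (c \<cdot>\<^sub>m A) = c * mtrace A"
  unfolding mtrace_def by (auto simp: sum_distrib_left intro!: sum.cong)

lemma ut_smult: "ut n A \<Longrightarrow> ut n (c \<cdot>\<^sub>m A)"
  unfolding ut_def by auto

lemma mtrace_conj: assumes b: "b \<in> carrier_mat n n" and bi: "binv \<in> carrier_mat n n" and M: "M \<in> carrier_mat n n"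
  and bib: "binv * b = 1\<^sub>m n"
  shows "mtrace (b * M * binv) = mtrace M"
proof -
  have "mtrace (b * M * binv) = mtrace (binv * (b * M))"
    by (rule mtrace_comm) (use b bi M in auto)
  also have "binv * (b * M) = (binv * b) * M" using b bi M by (simp add: assoc_mult_mat[of _ n n _ n _ n])
  finally show ?thesis using bib M by simp
qed

lemma mtrace_lp: assumes U: "ut n U" and M: "M \<in> carrier_mat n n"
  shows "mtrace (U * lower_part n M) = mtrace (U * M)"
proof -
  have Uc: "U \<in> carrier_mat n n" using U unfolding ut_def by auto
  have e: "(U * lower_part n M) $$ (a,a) = (U * M) $$ (a,a)" if a: "a < n" for a
  proof -
    have "lower_part n (U * lower_part n M) $$ (a,a) = lower_part n (U * M) $$ (a,a)"
      using LP1[OF U M] by simp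
    then show ?thesis using a by simp
  qed
  show ?thesis
    unfolding mtrace_carrier[OF mult_carrier_mat[OF Uc lp_carrier]] mtrace_carrier[OF mult_carrier_mat[OF Uc M]]
    using e by simp
qed

lemma conj_diag: assumes b: "ut n b" and bi: "ut n binv" and bbi: "b * binv = 1\<^sub>m n" and r: "ut n r"
  shows "ut n (b * r * binv)" "\<And>a. a < n \<Longrightarrow> (b * r * binv) $$ (a,a) = r $$ (a,a)"
proof -
  show "ut n (b * r * binv)" using ut_mult(1)[OF ut_mult(1)[OF b r] bi] .
  fix a assume a: "a < n"
  have "(b * r * binv) $$ (a,a) = b $$ (a,a) * r $$ (a,a) * binv $$ (a,a)"
    using ut_mult(2)[OF ut_mult(1)[OF b r] bi a] ut_mult(2)[OF b r a] by simp
  also have "b $$ (a,a) * binv $$ (a,a) = 1" using ut_mult(2)[OF b bi a] bbi a by simp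
  then have "b $$ (a,a) * r $$ (a,a) * binv $$ (a,a) = r $$ (a,a)"
    by (metis mult.commute mult.left_commute mult_1_right)
  finally show "(b * r * binv) $$ (a,a) = r $$ (a,a)" .
qed

lemma conj_mult: fixes b binv X Y :: "complex mat" assumes bc: "b \<in> carrier_mat n n" "binv \<in> carrier_mat n n" and X: "X \<in> carrier_mat n n"
  and Y: "Y \<in> carrier_mat n n" and bib: "binv * b = 1\<^sub>m n"
  shows "(b * X * binv) * (b * Y * binv) = b * (X * Y) * binv"
proof -
  have bb: "binv * (b * Z) = Z" if "Z \<in> carrier_mat n n" for Z
  proof -
    have "binv * (b * Z) = (binv * b) * Z" using that bc by (simp add: assoc_mult_mat[of _ n n _ n _ n])
    then show ?thesis using bib that by (metis left_mult_one_mat)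
  qed
  show ?thesis using bc X Y by (simp add: bb assoc_mult_mat[of _ n n _ n _ n] mult_carrier_mat[of _ n n _ n])
qed

lemma conj_lfac: assumes b: "ut n b" and bi: "ut n binv" and bbi: "b * binv = 1\<^sub>m n" and r: "ut n r" and k: "k < n"
  shows "lfac n (b * r * binv) k = b * lfac n r k * binv"
proof -
  have bc: "b \<in> carrier_mat n n" "binv \<in> carrier_mat n n" "r \<in> carrier_mat n n" using b bi r unfolding ut_def by auto
  let ?a = "r $$ (k,k)"
  have "b * lfac n r k * binv = b * (r - ?a \<cdot>\<^sub>m 1\<^sub>m n) * binv" unfolding lfac_def ..
  also have "b * (r - ?a \<cdot>\<^sub>m 1\<^sub>m n) = b * r - ?a \<cdot>\<^sub>m b"
    using bc by (simp add: mult_minus_distrib_mat[of _ n n _ n] mult_smult_distrib[of b n n "1\<^sub>m n" n])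
  also have "(b * r - ?a \<cdot>\<^sub>m b) * binv = b * r * binv - ?a \<cdot>\<^sub>m (b * binv)"
    using bc by (simp add: minus_mult_distrib_mat[of _ n n _ _ n] mult_smult_assoc_mat[of _ n n _ n])
  also have "\<dots> = lfac n (b * r * binv) k"
    unfolding lfac_def bbi conj_diag(2)[OF b bi bbi r k] ..
  finally show ?thesis ..
qed

lemma conj_FL: assumes b: "ut n b" and bi: "ut n binv" and bbi: "b * binv = 1\<^sub>m n" and bib: "binv * b = 1\<^sub>m n"
  and r: "ut n r" and ks: "\<forall>k\<in>set ks. k < n"
  shows "FL n (b * r * binv) ks = b * FL n r ks * binv"
  using ks
proof (induct ks)
  case Nil 
  have "b \<in> carrier_mat n n" using b unfolding ut_def by auto
  then show ?case using bbi by (simp add: FL_simps right_mult_one_mat[of b n n])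
next
  case (Cons k ks)
  have bc: "b \<in> carrier_mat n n" "binv \<in> carrier_mat n n" using b bi unfolding ut_def by auto
  let ?L = "lfac n r k" and ?F = "FL n r ks"
  have "FL n (b * r * binv) (k # ks) = (b * ?L * binv) * (b * ?F * binv)"
    using Cons conj_lfac[OF b bi bbi r] by (simp add: FL_simps)
  also have "\<dots> = b * (?L * ?F) * binv"
    by (rule conj_mult[OF bc _ _ bib]) auto
  finally show ?case by (simp add: FL_simps)
qed

lemma conj_prod_l: assumes b: "ut n b" and bi: "ut n binv" and bbi: "b * binv = 1\<^sub>m n" and bib: "binv * b = 1\<^sub>m n"
  and r: "ut n r"
  shows "prod_l n (b * r * binv) i = b * prod_l n r i * binv"
  unfolding prod_l_FL by (rule conj_FL[OF b bi bbi bib r]) auto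

lemma conj_trace_L: assumes b: "ut n b" and bi: "ut n binv" and bbi: "b * binv = 1\<^sub>m n" and bib: "binv * b = 1\<^sub>m n"
  and r: "ut n r" and s: "s \<in> carrier_mat n n"
  shows "mtrace (Lmat n (b * r * binv) k * lower_part n (b * s * binv)) = mtrace (Lmat n r k * s)"
proof -
  have bc: "b \<in> carrier_mat n n" "binv \<in> carrier_mat n n" using b bi unfolding ut_def by auto
  let ?P = "prod_l n r k"
  let ?c = "inverse (mtrace ?P)"
  have P': "prod_l n (b * r * binv) k = b * ?P * binv" by (rule conj_prod_l[OF b bi bbi bib r])
  have tr: "mtrace (b * ?P * binv) = mtrace ?P" by (rule mtrace_conj[OF bc prod_l_carrier bib])
  have L': "Lmat n (b * r * binv) k = ?c \<cdot>\<^sub>m (b * ?P * binv)" unfolding Lmat_def P' tr ..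
  have Lut: "ut n (Lmat n (b * r * binv) k)"
    unfolding L' by (rule ut_smult[OF ut_mult(1)[OF ut_mult(1)[OF b prod_l_ut[OF r]] bi]])
  have "mtrace (Lmat n (b * r * binv) k * lower_part n (b * s * binv))
      = mtrace (Lmat n (b * r * binv) k * (b * s * binv))"
    by (rule mtrace_lp[OF Lut]) (use bc s in auto)
  also have "\<dots> = ?c * mtrace ((b * ?P * binv) * (b * s * binv))"
  proof -
    have c1: "b * ?P * binv \<in> carrier_mat n n" "b * s * binv \<in> carrier_mat n n" using bc s by auto
    show ?thesis unfolding L' mult_smult_assoc_mat[OF c1] by (rule mtrace_smult[of _ n]) (use c1 in auto)
  qed
  also have "(b * ?P * binv) * (b * s * binv) = b * (?P * s) * binv"
    by (rule conj_mult[OF bc _ s bib]) auto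
  also have "mtrace (b * (?P * s) * binv) = mtrace (?P * s)" by (rule mtrace_conj[OF bc _ bib]) (use s mult_carrier_mat[OF prod_l_carrier s] in auto)
  also have "?c * mtrace (?P * s) = mtrace (Lmat n r k * s)"
    unfolding Lmat_def mult_smult_assoc_mat[OF prod_l_carrier s] mtrace_smult[OF mult_carrier_mat[OF prod_l_carrier s]] ..
  finally show ?thesis .
qed

lemma X_facts: assumes "(r,s,i,j) \<in> mu0_rss n"
  shows "ut n r" "distinct_diag n r" "s \<in> carrier_mat n n" "i \<in> carrier_mat n 1" "j \<in> carrier_mat 1 n"
    "lower_part n (r * s - s * r + i * j) = 0\<^sub>m n n"
    "\<forall>a<n. \<forall>b<n. a < b \<longrightarrow> s $$ (a,b) = 0"
  using assms unfolding mu0_rss_def ambient_def moment_def distinct_diag_def ut_iff by auto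

lemma borel_facts: assumes "b \<in> Borel n" "binv \<in> carrier_mat n n" "b * binv = 1\<^sub>m n"
  shows "ut n b" "ut n binv" "binv * b = 1\<^sub>m n"
proof -
  show b: "ut n b" using assms unfolding Borel_def ut_iff by auto
  show "ut n binv" by (rule ut_inverse(1)[OF b assms(2,3)])
  show "binv * b = 1\<^sub>m n" using mat_mult_left_right_inverse[OF _ assms(2,3)] assms unfolding Borel_def by auto
qed

lemma Pmap_inv: assumes x: "x \<in> mu0_rss n" and B: "b \<in> Borel n" "binv \<in> carrier_mat n n" "b * binv = 1\<^sub>m n"
  shows "Pmap n (act n b binv x) = Pmap n x"
proof -
  obtain r s i j where xe: "x = (r,s,i,j)" by (cases x) auto
  note F = X_facts[OF x[unfolded xe]]
  note G = borel_facts[OF B]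
  have 1: "map (\<lambda>k. (b * r * binv) $$ (k,k)) [0..<n] = map (\<lambda>k. r $$ (k,k)) [0..<n]"
    using conj_diag(2)[OF G(1,2) B(3) F(1)] by auto
  have 2: "map (\<lambda>k. mtrace (Lmat n (b * r * binv) k * lower_part n (b * s * binv))) [0..<n]
     = map (\<lambda>k. mtrace (Lmat n r k * s)) [0..<n]"
    using conj_trace_L[OF G(1,2) B(3) G(3) F(1) F(3)] by auto
  show ?thesis unfolding xe act_def Pmap_def using 1 2 by simp
qed

definition zpt :: "nat \<Rightarrow> complex list \<times> complex list \<Rightarrow> pt" where
  "zpt n p = (dmat n (\<lambda>k. fst p ! k), dmat n (\<lambda>k. snd p ! k), 0\<^sub>m n 1, 0\<^sub>m 1 n)"

lemma dmat_mult: "dmat n f * dmat n g = dmat n (\<lambda>k. f k * g k)"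
proof (rule eq_matI, goal_cases)
  case (1 a b) 
  then have ab: "a < n" "b < n" by auto
  show ?case using mult_dmat_left[OF dmat_carrier[of n g] ab, of f] ab by simp
qed auto

lemma zpt_in: assumes "length xs = n" "distinct xs"
  shows "zpt n (xs,ys) \<in> mu0_rss n"
proof -
  have c: "dmat n (\<lambda>k. xs ! k) * dmat n (\<lambda>k. ys ! k) = dmat n (\<lambda>k. ys ! k) * dmat n (\<lambda>k. xs ! k)"
    unfolding dmat_mult by (simp add: mult.commute)
  have m: "moment n (zpt n (xs,ys)) = 0\<^sub>m n n"
    unfolding moment_def zpt_def by (rule eq_matI) (auto simp: dmat_mult mult.commute)
  have d: "dmat n (\<lambda>k. xs ! k) $$ (a,a) \<noteq> dmat n (\<lambda>k. xs ! k) $$ (b,b)" if "a < n" "b < n" "a \<noteq> b" for a b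
    using that assms nth_eq_iff_index_eq by auto
  show ?thesis unfolding mu0_rss_def ambient_def using m d
    by (auto simp: zpt_def upper_triangular_def)
qed

lemma Pmap_zpt: assumes "length xs = n" "length ys = n" "distinct xs"
  shows "Pmap n (zpt n (xs,ys)) = (xs, ys)"
proof -
  let ?D = "dmat n (\<lambda>k. xs ! k)"
  have D: "ut n ?D" unfolding ut_def by auto
  have dd: "distinct_diag n ?D" unfolding distinct_diag_def using assms nth_eq_iff_index_eq by auto
  have tr: "mtrace (Lmat n ?D k * dmat n (\<lambda>k. ys ! k)) = ys ! k" if k: "k < n" for k
  proof -
    have "mtrace (Lmat n ?D k * dmat n (\<lambda>k. ys ! k)) = (\<Sum>a<n. Lmat n ?D k $$ (a,a) * ys ! a)"
      unfolding mtrace_carrier[OF mult_carrier_mat[OF Lmat_carrier dmat_carrier]]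
      by (rule sum.cong) (auto simp: mult_dmat_right[OF Lmat_carrier])
    also have "\<dots> = Lmat n ?D k $$ (k,k) * ys ! k"
      by (rule sum_single) (use k prod_l_diag[OF D dd k] in \<open>auto simp: Lmat_entry\<close>)
    also have "Lmat n ?D k $$ (k,k) = 1"
      using trace_prod_l[OF D dd k] k by (simp add: Lmat_entry)
    finally show ?thesis by simp
  qed
  show ?thesis unfolding Pmap_def zpt_def using assms tr
    by (auto intro!: nth_equalityI)
qed

lemma Pmap_range: "Pmap n ` mu0_rss n = target n"
proof
  show "Pmap n ` mu0_rss n \<subseteq> target n"
  proof
    fix p assume "p \<in> Pmap n ` mu0_rss n"
    then obtain r s i j where x: "(r,s,i,j) \<in> mu0_rss n" and p: "p = Pmap n (r,s,i,j)" by auto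
    have "distinct (map (\<lambda>k. r $$ (k,k)) [0..<n])"
      using X_facts(2)[OF x] unfolding distinct_diag_def distinct_map inj_on_def by (metis atLeastLessThan_iff distinct_upt set_upt)
    then show "p \<in> target n" unfolding p Pmap_def target_def by auto
  qed
  show "target n \<subseteq> Pmap n ` mu0_rss n"
  proof
    fix p assume "p \<in> target n"
    then obtain xs ys where p: "p = (xs,ys)" "length xs = n" "length ys = n" "distinct xs"
      unfolding target_def by auto
    show "p \<in> Pmap n ` mu0_rss n"
      using Pmap_zpt[OF p(2-4)] zpt_in[OF p(2,4)] p(1) by (metis image_eqI)
  qed
qed

lemma poly_minus: "f \<in> poly_fun n \<Longrightarrow> g \<in> poly_fun n \<Longrightarrow> (\<lambda>x. f x - g x) \<in> poly_fun n"
proof -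
  assume f: "f \<in> poly_fun n" and g: "g \<in> poly_fun n"
  have "(\<lambda>x. f x + (\<lambda>_. -1) x * g x) \<in> poly_fun n"
    by (intro poly_fun.add poly_fun.mult poly_fun.const f g)
  then show ?thesis by simp
qed

lemma poly_sum: "(\<And>c. c < (m::nat) \<Longrightarrow> f c \<in> poly_fun n) \<Longrightarrow> (\<lambda>x. \<Sum>c<m. f c x) \<in> poly_fun n"
proof (induct m)
  case 0 then show ?case using poly_fun.const[of 0 n] by simp
next
  case (Suc m)
  have "(\<lambda>x. (\<Sum>c<m. f c x) + f m x) \<in> poly_fun n"
    by (rule poly_fun.add) (use Suc in auto)
  then show ?case by simp
qed

definition pm :: "nat \<Rightarrow> (pt \<Rightarrow> complex mat) \<Rightarrow> bool" where
  "pm n F \<longleftrightarrow> (\<forall>x. F x \<in> carrier_mat n n) \<and> (\<forall>a<n. \<forall>b<n. (\<lambda>x. F x $$ (a,b)) \<in> poly_fun n)"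

lemma pm_mult: assumes F: "pm n F" and G: "pm n G" shows "pm n (\<lambda>x. F x * G x)"
proof -
  have Fc: "\<And>x. F x \<in> carrier_mat n n" and Gc: "\<And>x. G x \<in> carrier_mat n n"
    and Fp: "\<And>a b. a < n \<Longrightarrow> b < n \<Longrightarrow> (\<lambda>x. F x $$ (a,b)) \<in> poly_fun n"
    and Gp: "\<And>a b. a < n \<Longrightarrow> b < n \<Longrightarrow> (\<lambda>x. G x $$ (a,b)) \<in> poly_fun n"
    using F G unfolding pm_def by blast+
  show ?thesis unfolding pm_def
  proof (intro conjI allI impI)
    fix x show "F x * G x \<in> carrier_mat n n" by (rule mult_carrier_mat[OF Fc Gc])
  next
    fix a b assume ab: "a < n" "b < n"
    have e: "(F x * G x) $$ (a,b) = (\<Sum>c<n. F x $$ (a,c) * G x $$ (c,b))" for x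
      by (rule mult_entry[OF Fc Gc ab])
    show "(\<lambda>x. (F x * G x) $$ (a,b)) \<in> poly_fun n"
      unfolding e by (rule poly_sum, rule poly_fun.mult) (use Fp Gp ab in auto)
  qed
qed

lemma pm_one: "pm n (\<lambda>x. 1\<^sub>m n)"
  unfolding pm_def by (auto intro: poly_fun.const)

lemma pm_lfac: assumes F: "pm n F" and k: "k < n" shows "pm n (\<lambda>x. lfac n (F x) k)"
  unfolding pm_def
proof (intro conjI allI impI)
  fix x show "lfac n (F x) k \<in> carrier_mat n n" by simp
next
  fix a b assume ab: "a < n" "b < n"
  have Fc: "F x \<in> carrier_mat n n" for x using F unfolding pm_def by blast
  have e: "lfac n (F x) k $$ (a,b) = F x $$ (a,b) - (if a = b then F x $$ (k,k) else 0)" for x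
    by (rule lfac_entry[OF Fc ab])
  show "(\<lambda>x. lfac n (F x) k $$ (a,b)) \<in> poly_fun n"
    unfolding e by (cases "a = b") (use F ab k in \<open>auto simp: pm_def intro!: poly_minus poly_fun.const\<close>)
qed

lemma pm_FL: assumes F: "pm n F" shows "\<forall>k\<in>set ks. k < n \<Longrightarrow> pm n (\<lambda>x. FL n (F x) ks)"
proof (induct ks)
  case Nil then show ?case by (simp add: FL_simps pm_one)
next
  case (Cons k ks)
  then show ?case unfolding FL_simps by (intro pm_mult pm_lfac F) auto
qed

lemma pm_prod_l: "pm n F \<Longrightarrow> pm n (\<lambda>x. prod_l n (F x) k)"
  unfolding prod_l_FL by (rule pm_FL) auto

lemma pm_trace: assumes F: "pm n F" shows "(\<lambda>x. mtrace (F x)) \<in> poly_fun n"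
proof -
  have e: "mtrace (F x) = (\<Sum>a<n. F x $$ (a,a))" for x 
    by (rule mtrace_carrier) (use F in \<open>unfold pm_def, blast\<close>)
  show ?thesis unfolding e by (rule poly_sum) (use F in \<open>auto simp: pm_def\<close>)
qed

definition Rm :: "nat \<Rightarrow> pt \<Rightarrow> complex mat" where "Rm n x = mat n n (\<lambda>(a,b). fst x $$ (a,b))"
definition Sm :: "nat \<Rightarrow> pt \<Rightarrow> complex mat" where "Sm n x = mat n n (\<lambda>(a,b). fst (snd x) $$ (a,b))"

lemma pm_Rm: "pm n (Rm n)"
proof -
  have "(\<lambda>(r,s,i,j). r $$ (a,b)) \<in> poly_fun n" if "a < n" "b < n" for a b
    by (rule poly_fun.coord_r) (use that in auto)
  moreover have "(\<lambda>(r,s,i,j). r $$ (a,b)) = (\<lambda>x. Rm n x $$ (a,b))" if "a < n" "b < n" for a b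
    using that by (auto simp: Rm_def)
  ultimately show ?thesis unfolding pm_def Rm_def[abs_def] by auto
qed

lemma pm_Sm: "pm n (Sm n)"
proof -
  have "(\<lambda>(r,s,i,j). s $$ (a,b)) \<in> poly_fun n" if "a < n" "b < n" for a b
    by (rule poly_fun.coord_s) (use that in auto)
  moreover have "(\<lambda>(r,s,i,j). s $$ (a,b)) = (\<lambda>x. Sm n x $$ (a,b))" if "a < n" "b < n" for a b
    using that by (auto simp: Sm_def)
  ultimately show ?thesis unfolding pm_def Sm_def[abs_def] by auto
qed

lemma Rm_X: "(r,s,i,j) \<in> mu0_rss n \<Longrightarrow> Rm n (r,s,i,j) = r"
  using X_facts(1)[of r s i j n] unfolding Rm_def ut_def by (auto intro!: eq_matI)
lemma Sm_X: "(r,s,i,j) \<in> mu0_rss n \<Longrightarrow> Sm n (r,s,i,j) = s"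
  using X_facts(3)[of r s i j n] unfolding Sm_def by (auto intro!: eq_matI)

lemma regular_parts: assumes k: "k < n"
  shows "regular_on n (mu0_rss n) (\<lambda>x. fst (Pmap n x) ! k)"
    "regular_on n (mu0_rss n) (\<lambda>x. snd (Pmap n x) ! k)"
proof -
  have "(\<lambda>(r,s,i,j). r $$ (k,k)) \<in> poly_fun n" by (rule poly_fun.coord_r) (use k in auto)
  then show "regular_on n (mu0_rss n) (\<lambda>x. fst (Pmap n x) ! k)"
    unfolding regular_on_def using k
    by (intro bexI[of _ "\<lambda>(r,s,i,j). r $$ (k,k)"] bexI[of _ "\<lambda>_. 1"] poly_fun.const)
      (auto simp: Pmap_def)
  let ?p = "\<lambda>x. mtrace (prod_l n (Rm n x) k * Sm n x)"
  let ?q = "\<lambda>x. mtrace (prod_l n (Rm n x) k)"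
  have p: "?p \<in> poly_fun n" by (intro pm_trace pm_mult pm_prod_l pm_Rm pm_Sm)
  have q: "?q \<in> poly_fun n" by (intro pm_trace pm_prod_l pm_Rm)
  have H: "\<forall>x\<in>mu0_rss n. ?q x \<noteq> 0 \<and> snd (Pmap n x) ! k = ?p x / ?q x"
  proof
    fix x assume x: "x \<in> mu0_rss n"
    obtain r s i j where xe: "x = (r,s,i,j)" by (cases x) auto
    note F = X_facts[OF x[unfolded xe]]
    have "snd (Pmap n x) ! k = mtrace (Lmat n r k * s)" unfolding xe Pmap_def using k by simp
    also have "\<dots> = inverse (mtrace (prod_l n r k)) * mtrace (prod_l n r k * s)"
      unfolding Lmat_def mult_smult_assoc_mat[OF prod_l_carrier F(3)] mtrace_smult[OF mult_carrier_mat[OF prod_l_carrier F(3)]] ..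
    finally show "?q x \<noteq> 0 \<and> snd (Pmap n x) ! k = ?p x / ?q x"
      using trace_prod_l(2)[OF F(1,2) k] x unfolding xe Rm_X[OF x[unfolded xe]] Sm_X[OF x[unfolded xe]]
      by (simp add: field_simps)
  qed
  show "regular_on n (mu0_rss n) (\<lambda>x. snd (Pmap n x) ! k)"
    unfolding regular_on_def
  proof (rule bexI[OF _ p], rule bexI[OF _ q])
    show "\<forall>x\<in>mu0_rss n. ?q x \<noteq> 0 \<and> snd (Pmap n x) ! k = ?p x / ?q x" by (rule H)
  qed
qed

lemma act_comp: assumes T: "T \<in> carrier_mat n n" "Ti \<in> carrier_mat n n" "ut n T" "ut n Ti"
  and W: "W \<in> carrier_mat n n" "V \<in> carrier_mat n n"
  and x: "r \<in> carrier_mat n n" "s \<in> carrier_mat n n" "i \<in> carrier_mat n 1" "j \<in> carrier_mat 1 n"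
  shows "act n T Ti (act n W V (r,s,i,j)) = act n (T * W) (V * Ti) (r,s,i,j)"
proof -
  have 1: "T * (W * r * V) * Ti = T * W * r * (V * Ti)"
    using T W x by (simp add: assoc_mult_mat[of _ n n _ n _ n] mult_carrier_mat[of _ n n _ n])
  have 2: "lower_part n (T * lower_part n (W * s * V) * Ti) = lower_part n (T * W * s * (V * Ti))"
  proof -
    have "lower_part n (T * lower_part n (W * s * V) * Ti) = lower_part n (T * (W * s * V) * Ti)"
      by (rule LP3) (use T W x in auto)
    also have "T * (W * s * V) * Ti = T * W * s * (V * Ti)"
      using T W x by (simp add: assoc_mult_mat[of _ n n _ n _ n] mult_carrier_mat[of _ n n _ n])
    finally show ?thesis .
  qed
  have 3: "T * (W * i) = T * W * i" using T W x by (simp add: assoc_mult_mat[of T n n W n i 1])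
  have 4: "j * V * Ti = j * (V * Ti)" using T W x by (simp add: assoc_mult_mat[of j 1 n V n Ti n])
  show ?thesis unfolding act_def using 1 2 3 4 by simp
qed

lemma moment_act: assumes x: "(r,s,i,j) \<in> mu0_rss n" and b: "ut n b" "ut n binv" "b * binv = 1\<^sub>m n" "binv * b = 1\<^sub>m n"
  shows "lower_part n ((b * r * binv) * lower_part n (b * s * binv) - lower_part n (b * s * binv) * (b * r * binv)
     + (b * i) * (j * binv)) = 0\<^sub>m n n"
proof -
  note F = X_facts[OF x]
  have bc: "b \<in> carrier_mat n n" "binv \<in> carrier_mat n n" using b unfolding ut_def by auto
  have rc: "r \<in> carrier_mat n n" using F(1) unfolding ut_def by auto
  note sc = F(3) and ic = F(4) and jc = F(5)
  let ?r = "b * r * binv" and ?M = "b * s * binv"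
  have r': "ut n ?r" using conj_diag(1)[OF b(1,2,3) F(1)] .
  have c1: "?r \<in> carrier_mat n n" "?M \<in> carrier_mat n n" using bc rc sc by auto
  have ij: "(b * i) * (j * binv) = b * (i * j) * binv"
    using bc ic jc by (simp add: assoc_mult_mat[of _ n n _ 1 _ n] assoc_mult_mat[of _ n 1 _ n _ n] 
        assoc_mult_mat[of _ n n _ n _ n] mult_carrier_mat[of _ n 1 _ n])
  have rs: "?r * ?M = b * (r * s) * binv" by (rule conj_mult[OF bc rc sc b(4)])
  have sr: "?M * ?r = b * (s * r) * binv" by (rule conj_mult[OF bc sc rc b(4)])
  have "lower_part n (?r * lower_part n ?M - lower_part n ?M * ?r + (b * i) * (j * binv))
     = lower_part n (?r * lower_part n ?M) - lower_part n (lower_part n ?M * ?r) + lower_part n ((b * i) * (j * binv))"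
  proof -
    have A: "?r * lower_part n ?M \<in> carrier_mat n n" "lower_part n ?M * ?r \<in> carrier_mat n n"
      "(b * i) * (j * binv) \<in> carrier_mat n n"
      by (rule mult_carrier_mat[OF c1(1) lp_carrier], rule mult_carrier_mat[OF lp_carrier c1(1)],
          rule mult_carrier_mat[OF mult_carrier_mat[OF bc(1) ic] mult_carrier_mat[OF jc bc(2)]])
    show ?thesis unfolding lp_add[OF minus_carrier_mat[OF A(2)] A(3)] lp_minus[OF A(1,2)] ..
  qed
  also have "\<dots> = lower_part n (b * (r * s) * binv) - lower_part n (b * (s * r) * binv) + lower_part n (b * (i * j) * binv)"
    unfolding LP1[OF r' c1(2)] LP2[OF r' c1(2)] rs sr ij ..
  also have "\<dots> = lower_part n (b * (r * s) * binv - b * (s * r) * binv + b * (i * j) * binv)"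
  proof -
    have A: "b * (r * s) * binv \<in> carrier_mat n n" "b * (s * r) * binv \<in> carrier_mat n n"
      "b * (i * j) * binv \<in> carrier_mat n n"
      by (rule mult_carrier_mat[OF mult_carrier_mat[OF bc(1) mult_carrier_mat[OF rc sc]] bc(2)],
          rule mult_carrier_mat[OF mult_carrier_mat[OF bc(1) mult_carrier_mat[OF sc rc]] bc(2)],
          rule mult_carrier_mat[OF mult_carrier_mat[OF bc(1) mult_carrier_mat[OF ic jc]] bc(2)])
    show ?thesis unfolding lp_add[OF minus_carrier_mat[OF A(2)] A(3)] lp_minus[OF A(1,2)] ..
  qed
  also have "b * (r * s) * binv - b * (s * r) * binv + b * (i * j) * binv = b * (r * s - s * r + i * j) * binv"
  proof -
    have c2: "r * s \<in> carrier_mat n n" "s * r \<in> carrier_mat n n" "i * j \<in> carrier_mat n n" using rc sc ic jc by auto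
    have "b * (r * s - s * r + i * j) = b * (r * s) - b * (s * r) + b * (i * j)"
      unfolding mult_add_distrib_mat[OF bc(1) minus_carrier_mat[OF c2(2)] c2(3)] mult_minus_distrib_mat[OF bc(1) c2(1,2)] ..
    moreover have "(b * (r * s) - b * (s * r) + b * (i * j)) * binv = b * (r * s) * binv - b * (s * r) * binv + b * (i * j) * binv"
    proof -
      have d: "b * (r * s) \<in> carrier_mat n n" "b * (s * r) \<in> carrier_mat n n" "b * (i * j) \<in> carrier_mat n n"
        using c2 bc by (auto intro: mult_carrier_mat)
      show ?thesis unfolding add_mult_distrib_mat[OF minus_carrier_mat[OF d(2)] d(3) bc(2)] minus_mult_distrib_mat[OF d(1,2) bc(2)] ..
    qed
    ultimately show ?thesis by simp
  qed
  also have "lower_part n (b * (r * s - s * r + i * j) * binv) = lower_part n (b * lower_part n (r * s - s * r + i * j) * binv)"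
    by (rule LP3[symmetric]) (use b rc sc ic jc in auto)
  also have "\<dots> = 0\<^sub>m n n"
  proof -
    have "b * 0\<^sub>m n n * binv = 0\<^sub>m n n"
      using right_mult_zero_mat[OF bc(1), of n] left_mult_zero_mat[OF bc(2), of n] by simp
    then show ?thesis unfolding F(6) by (intro eq_matI) auto
  qed
  finally show ?thesis .
qed



lemma Lmat_dim[simp]: "dim_row (Lmat n r i) = n" "dim_col (Lmat n r i) = n"
  by (simp_all add: Lmat_def prod_l_FL)

lemma lfac_dmat: "k < n \<Longrightarrow> lfac n (dmat n d) k = dmat n (\<lambda>a. d a - d k)"
  by (rule eq_matI) (auto simp: lfac_entry)

lemma FL_dmat: "\<forall>k\<in>set ks. k < n \<Longrightarrow> FL n (dmat n d) ks = dmat n (\<lambda>a. \<Prod>k\<leftarrow>ks. d a - d k)"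
proof (induct ks)
  case Nil then show ?case by (auto simp: FL_simps intro!: eq_matI)
next
  case (Cons k ks) then show ?case by (simp add: FL_simps lfac_dmat dmat_mult)
qed

lemma Lmat_dmat: assumes d: "distinct_diag n (dmat n d)" and k: "k < n"
  shows "Lmat n (dmat n d) k = dmat n (\<lambda>a. if a = k then 1 else 0)"
proof (rule eq_matI, goal_cases)
  case (1 a b)
  then have ab: "a < n" "b < n" by auto
  have D: "ut n (dmat n d)" unfolding ut_def by auto
  have P: "prod_l n (dmat n d) k = dmat n (\<lambda>a. \<Prod>j\<leftarrow>filter (\<lambda>j. j \<noteq> k) [0..<n]. d a - d j)"
    unfolding prod_l_FL by (rule FL_dmat) auto
  show ?case
  proof (cases "a = b")
    case True
    show ?thesis using prod_l_diag[OF D d k ab(1)] trace_prod_l[OF D d k] True ab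
      by (auto simp: Lmat_entry)
  next
    case False
    then show ?thesis using ab by (simp add: Lmat_entry P)
  qed
qed auto

lemma cont_zero: fixes h :: "complex \<Rightarrow> complex"
  assumes c: "isCont h 0" and z: "\<And>t. t \<noteq> 0 \<Longrightarrow> h t = 0"
  shows "h 0 = 0"
proof -
  have "(h \<longlongrightarrow> h 0) (at 0)" using c isCont_def by blast
  moreover have "(h \<longlongrightarrow> 0) (at 0)"
  proof (rule tendsto_eventually)
    show "eventually (\<lambda>t. h t = 0) (at 0)" using z by (auto simp: eventually_at intro: exI[of _ 1])
  qed
  ultimately show ?thesis using tendsto_unique[OF at_neq_bot] by blast
qed

lemma dmat_cong: "(\<And>k. k < n \<Longrightarrow> f k = g k) \<Longrightarrow> dmat n f = dmat n g"
  by (rule eq_matI) auto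

lemma dmat_one: "(\<And>k. k < n \<Longrightarrow> f k = 1) \<Longrightarrow> dmat n f = 1\<^sub>m n"
  by (rule eq_matI) auto

lemma closure_point: assumes x: "x \<in> mu0_rss n"
  shows "zpt n (Pmap n x) \<in> zclosure_in n (mu0_rss n) (orbit n x)"
proof -
  obtain r s i j where xe: "x = (r,s,i,j)" by (cases x) auto
  have xX: "(r,s,i,j) \<in> mu0_rss n" using x xe by simp
  note F = X_facts[OF xX]
  have rc: "r \<in> carrier_mat n n" using F(1) unfolding ut_def by auto
  note sc = F(3) and ic = F(4) and jc = F(5)
  obtain W V where WV: "W \<in> Borel n" "ut n W" "ut n V" "W * V = 1\<^sub>m n" "V * W = 1\<^sub>m n"
    "W * r * V = dmat n (\<lambda>k. r $$ (k,k))" using diagonalize[OF F(1,2)] by blast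
  have Wc: "W \<in> carrier_mat n n" and Vc: "V \<in> carrier_mat n n" using WV unfolding ut_def by auto
  define d where "d = (\<lambda>k. r $$ (k,k))"
  define D where "D = dmat n d"
  define s' where "s' = lower_part n (W * s * V)"
  define i' where "i' = W * i"
  define j' where "j' = j * V"
  have ic': "i' \<in> carrier_mat n 1" unfolding i'_def using Wc ic by auto
  have jc': "j' \<in> carrier_mat 1 n" unfolding j'_def using Vc jc by auto
  have sc': "s' \<in> carrier_mat n n" unfolding s'_def by simp
  have Dc: "D \<in> carrier_mat n n" unfolding D_def by simp
  have act1: "act n W V (r,s,i,j) = (D, s', i', j')"
    unfolding act_def D_def d_def s'_def i'_def j'_def using WV(6) by simp
  have Pm: "Pmap n (D,s',i',j') = Pmap n x"
    using Pmap_inv[OF x WV(1) Vc WV(4)] act1 xe by simp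
  have dd: "distinct_diag n D" using F(2) unfolding distinct_diag_def D_def d_def by auto
  have dne: "d a \<noteq> d b" if "a < n" "b < n" "a \<noteq> b" for a b
    using F(2) that unfolding distinct_diag_def d_def by auto
  have mc: "lower_part n (D * s' - s' * D + i' * j') = 0\<^sub>m n n"
    using moment_act[OF xX WV(2) WV(3) WV(4) WV(5)] WV(6)
    unfolding D_def d_def s'_def i'_def j'_def by simp
  have mce: "d a * s' $$ (a,b) - s' $$ (a,b) * d b + i' $$ (a,0) * j' $$ (0,b) = 0"
    if ab: "a < n" "b \<le> a" for a b
  proof -
    have bn: "b < n" using ab by auto
    have "lower_part n (D * s' - s' * D + i' * j') $$ (a,b) = 0" using mc ab bn by simp
    then have "(D * s' - s' * D + i' * j') $$ (a,b) = 0" using ab bn by simp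
    moreover have "(D * s' - s' * D + i' * j') $$ (a,b) = (D * s') $$ (a,b) - (s' * D) $$ (a,b) + (i' * j') $$ (a,b)"
      using ab bn ic' jc' sc' Dc by simp
    moreover have "(D * s') $$ (a,b) = d a * s' $$ (a,b)" unfolding D_def by (rule mult_dmat_left[OF sc' ab(1) bn])
    moreover have "(s' * D) $$ (a,b) = s' $$ (a,b) * d b" unfolding D_def by (rule mult_dmat_right[OF sc' ab(1) bn])
    moreover have "(i' * j') $$ (a,b) = i' $$ (a,0) * j' $$ (0,b)"
      using mult_entry[OF ic' jc' ab(1) bn] by simp
    ultimately show ?thesis by simp
  qed
  have ij0: "i' $$ (a,0) * j' $$ (0,a) = 0" if "a < n" for a using mce[of a a] that by simp
  have soff: "i' $$ (a,0) \<noteq> 0 \<and> j' $$ (0,b) \<noteq> 0" if "a < n" "b < a" "s' $$ (a,b) \<noteq> 0" for a b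
  proof -
    have "(d a - d b) * s' $$ (a,b) = - (i' $$ (a,0) * j' $$ (0,b))" using mce[of a b] that
      by (simp add: algebra_simps)
    moreover have "(d a - d b) * s' $$ (a,b) \<noteq> 0" using dne[of a b] that by auto
    ultimately show ?thesis by auto
  qed
  have zP: "zpt n (Pmap n x) = (D, dmat n (\<lambda>k. s' $$ (k,k)), 0\<^sub>m n 1, 0\<^sub>m 1 n)"
  proof -
    have tr: "mtrace (Lmat n D k * s') = s' $$ (k,k)" if k: "k < n" for k
    proof -
      have "mtrace (Lmat n D k * s') = (\<Sum>a<n. (if a = k then 1 else 0) * s' $$ (a,a))"
        unfolding D_def Lmat_dmat[OF dd[unfolded D_def] k] mtrace_carrier[OF mult_carrier_mat[OF dmat_carrier sc']]
        by (rule sum.cong) (auto simp: mult_dmat_left[OF sc'])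
      also have "\<dots> = (\<Sum>a<n. if k = a then s' $$ (a,a) else 0)" by (rule sum.cong) auto
      also have "\<dots> = s' $$ (k,k)" using k by simp
      finally show ?thesis .
    qed
    have 1: "dmat n (\<lambda>k. fst (Pmap n x) ! k) = D"
      unfolding Pm[symmetric] unfolding Pmap_def D_def by (rule dmat_cong) auto
    have 2: "dmat n (\<lambda>k. snd (Pmap n x) ! k) = dmat n (\<lambda>k. s' $$ (k,k))"
      unfolding Pm[symmetric] unfolding Pmap_def by (rule dmat_cong) (auto simp: tr)
    show ?thesis unfolding zpt_def 1 2 ..
  qed
  define gs where "gs t = mat n n (\<lambda>(a,b). if b \<le> a then (if a = b then s' $$ (a,a) else t^2 * s' $$ (a,b)) else 0)" for t :: complex
  define \<gamma> where "\<gamma> t = (D, gs t, t \<cdot>\<^sub>m i', t \<cdot>\<^sub>m j')" for t :: complex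
  have g0: "\<gamma> 0 = zpt n (Pmap n x)"
  proof -
    have "gs 0 = dmat n (\<lambda>k. s' $$ (k,k))" unfolding gs_def by (rule eq_matI) auto
    moreover have "0 \<cdot>\<^sub>m i' = 0\<^sub>m n 1" using ic' by (intro eq_matI) auto
    moreover have "0 \<cdot>\<^sub>m j' = 0\<^sub>m 1 n" using jc' by (intro eq_matI) auto
    ultimately show ?thesis unfolding zP \<gamma>_def by simp
  qed
  have gorb: "\<gamma> t \<in> orbit n x" if t: "t \<noteq> 0" for t
  proof -
    define f where "f a = (if i' $$ (a,0) \<noteq> 0 then t else inverse t)" for a
    have fnz: "f a \<noteq> 0" for a unfolding f_def using t by auto
    define T where "T = dmat n f"
    define Ti where "Ti = dmat n (\<lambda>a. inverse (f a))"
    have Tc: "T \<in> carrier_mat n n" "Ti \<in> carrier_mat n n" unfolding T_def Ti_def by auto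
    have Tut: "ut n T" "ut n Ti" unfolding T_def Ti_def ut_def by auto
    have TTi: "T * Ti = 1\<^sub>m n" unfolding T_def Ti_def dmat_mult by (rule dmat_one) (simp add: fnz)
    have TiT: "Ti * T = 1\<^sub>m n" unfolding T_def Ti_def dmat_mult by (rule dmat_one) (simp add: fnz)
    have TWc: "T * W \<in> carrier_mat n n" "V * Ti \<in> carrier_mat n n" using Tc Wc Vc by auto
    have e1: "(T * W) * (V * Ti) = 1\<^sub>m n"
    proof -
      have "(T * W) * (V * Ti) = T * (W * V) * Ti"
        using Tc Wc Vc by (simp add: assoc_mult_mat[of _ n n _ n _ n] mult_carrier_mat[of _ n n _ n])
      then show ?thesis using WV(4) TTi Tc by simp
    qed
    have e2: "(V * Ti) * (T * W) = 1\<^sub>m n"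
    proof -
      have "(V * Ti) * (T * W) = V * (Ti * T) * W"
        using Tc Wc Vc by (simp add: assoc_mult_mat[of _ n n _ n _ n] mult_carrier_mat[of _ n n _ n])
      then show ?thesis using WV(5) TiT Vc by simp
    qed
    have TB: "T * W \<in> Borel n"
      unfolding Borel_def invertible_mat_def inverts_mat_def
      using TWc e1 e2 ut_mult(1)[OF Tut(1) WV(2)] ut_iff Tc Wc
      by (auto intro!: exI[of _ "V * Ti"])
    have comp: "act n (T * W) (V * Ti) x = act n T Ti (D, s', i', j')"
      unfolding xe act1[symmetric] by (rule act_comp[symmetric, OF Tc Tut Wc Vc rc sc ic jc])
    have a1: "T * D * Ti = D"
      unfolding T_def Ti_def D_def dmat_mult by (rule dmat_cong) (simp add: fnz)
    have a2: "lower_part n (T * s' * Ti) = gs t"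
    proof (rule eq_matI, goal_cases)
      case (1 a b)
      then have ab: "a < n" "b < n" unfolding gs_def by auto
      have e: "(T * s' * Ti) $$ (a,b) = f a * s' $$ (a,b) * inverse (f b)"
      proof -
        have "(T * s' * Ti) $$ (a,b) = (T * s') $$ (a,b) * inverse (f b)"
          unfolding Ti_def by (rule mult_dmat_right[OF mult_carrier_mat[OF Tc(1) sc'] ab])
        also have "(T * s') $$ (a,b) = f a * s' $$ (a,b)" unfolding T_def by (rule mult_dmat_left[OF sc' ab])
        finally show ?thesis .
      qed
      show ?case
      proof (cases "b \<le> a")
        case False then show ?thesis using ab unfolding gs_def by simp
      next
        case True
        show ?thesis
        proof (cases "a = b")
          case True then show ?thesis using ab fnz e unfolding gs_def by simp
        next
          case False
          show ?thesis
          proof (cases "s' $$ (a,b) = 0")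
            case True then show ?thesis using ab `b \<le> a` `a \<noteq> b` e unfolding gs_def by simp
          next
            case sn: False
            have ba: "b < a" using False `b \<le> a` by auto
            have h: "i' $$ (a,0) \<noteq> 0" "j' $$ (0,b) \<noteq> 0" using soff[OF ab(1) ba sn] by auto
            have "i' $$ (b,0) = 0" using ij0[OF ab(2)] h(2) by simp
            then have "f a = t" "f b = inverse t" using h unfolding f_def by auto
            then show ?thesis using ab ba e unfolding gs_def by (simp add: power2_eq_square)
          qed
        qed
      qed
    qed (auto simp: gs_def)
    have a3: "T * i' = t \<cdot>\<^sub>m i'"
    proof (rule eq_matI, goal_cases)
      case (1 a b)
      then have ab: "a < n" "b = 0" using ic' by auto
      have "(T * i') $$ (a,0) = f a * i' $$ (a,0)" unfolding T_def by (rule mult_dmat_left[OF ic' ab(1)]) simp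
      then show ?case using ab ic' by (simp add: f_def)
    qed (use ic' Tc in auto)
    have a4: "j' * Ti = t \<cdot>\<^sub>m j'"
    proof (rule eq_matI, goal_cases)
      case (1 a b)
      then have ab: "a = 0" "b < n" using jc' by auto
      have "j' $$ (0,b) * inverse (f b) = t * j' $$ (0,b)"
      proof (cases "j' $$ (0,b) = 0")
        case False
        then have "i' $$ (b,0) = 0" using ij0[OF ab(2)] by simp
        then show ?thesis unfolding f_def by simp
      qed simp
      moreover have "(j' * Ti) $$ (0,b) = j' $$ (0,b) * inverse (f b)" unfolding Ti_def by (rule mult_dmat_right[OF jc' _ ab(2)]) simp
      ultimately show ?case using ab jc' by simp
    qed (use jc' Tc in auto)
    have "act n T Ti (D, s', i', j') = \<gamma> t" unfolding act_def \<gamma>_def using a1 a2 a3 a4 by simp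
    then have "\<gamma> t = act n (T * W) (V * Ti) x" using comp by simp
    then show ?thesis unfolding orbit_def using TB TWc(2) e1 by blast
  qed
  have gcont: "isCont (\<lambda>t. p (\<gamma> t)) t0" if p: "p \<in> poly_fun n" for p t0
    using p
  proof (induct rule: poly_fun.induct)
    case (const c) then show ?case by simp
  next
    case (coord_r a b) then show ?case by (simp add: \<gamma>_def)
  next
    case (coord_s a b)
    then show ?case unfolding \<gamma>_def gs_def
      by (cases "b \<le> a"; cases "a = b") (auto intro!: continuous_intros)
  next
    case (coord_i a) then show ?case unfolding \<gamma>_def using ic' by (auto intro!: continuous_intros)
  next
    case (coord_j b) then show ?case unfolding \<gamma>_def using jc' by (auto intro!: continuous_intros)
  next
    case (add f g) then show ?case by (auto intro!: continuous_intros)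
  next
    case (mult f g) then show ?case by (auto intro!: continuous_intros)
  qed
  have zX: "zpt n (Pmap n x) \<in> mu0_rss n"
  proof -
    have "Pmap n x \<in> target n" using x Pmap_range by blast
    then obtain xs ys where "Pmap n x = (xs,ys)" "length xs = n" "distinct xs" unfolding target_def by auto
    then show ?thesis using zpt_in by simp
  qed
  show ?thesis unfolding zclosure_in_def
  proof (intro CollectI conjI ballI impI zX)
    fix p assume p: "p \<in> poly_fun n" and v: "\<forall>y\<in>orbit n x. p y = 0"
    have "(\<lambda>t. p (\<gamma> t)) 0 = 0"
      by (rule cont_zero[OF gcont[OF p]]) (use v gorb in auto)
    then show "p (zpt n (Pmap n x)) = 0" using g0 by simp
  qed
qed


theorem mainTheorem12:
  fixes n :: nat
  shows "(\<forall>x\<in>mu0_rss n. \<forall>\<iota><n. mtrace (prod_l n (fst x) \<iota>) \<noteq> 0)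
    \<and> (\<forall>k<n. regular_on n (mu0_rss n) (\<lambda>x. fst (Pmap n x) ! k)
            \<and> regular_on n (mu0_rss n) (\<lambda>x. snd (Pmap n x) ! k))
    \<and> (\<forall>x\<in>mu0_rss n. \<forall>b binv. b \<in> Borel n \<and> binv \<in> carrier_mat n n \<and> b * binv = 1\<^sub>m n
          \<longrightarrow> Pmap n (act n b binv x) = Pmap n x)
    \<and> Pmap n ` mu0_rss n = target n
    \<and> (\<forall>x\<in>mu0_rss n. \<forall>y\<in>mu0_rss n.
          zclosure_in n (mu0_rss n) (orbit n x) \<inter> zclosure_in n (mu0_rss n) (orbit n y) = {}
          \<longrightarrow> Pmap n x \<noteq> Pmap n y)"
proof (intro conjI ballI allI impI)
  fix x \<iota> assume x: "x \<in> mu0_rss n" and i: "\<iota> < n"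
  obtain r s i j where xe: "x = (r,s,i,j)" by (cases x) auto
  note F = X_facts[OF x[unfolded xe]]
  show "mtrace (prod_l n (fst x) \<iota>) \<noteq> 0" using trace_prod_l(2)[OF F(1,2) i] xe by simp
next
  fix k assume "k < n"
  then show "regular_on n (mu0_rss n) (\<lambda>x. fst (Pmap n x) ! k)"
    "regular_on n (mu0_rss n) (\<lambda>x. snd (Pmap n x) ! k)" using regular_parts by auto
next
  fix x b binv assume "x \<in> mu0_rss n" "b \<in> Borel n \<and> binv \<in> carrier_mat n n \<and> b * binv = 1\<^sub>m n"
  then show "Pmap n (act n b binv x) = Pmap n x" using Pmap_inv by blast
next
  show "Pmap n ` mu0_rss n = target n" by (rule Pmap_range)
next
  fix x y assume x: "x \<in> mu0_rss n" and y: "y \<in> mu0_rss n"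
    and dis: "zclosure_in n (mu0_rss n) (orbit n x) \<inter> zclosure_in n (mu0_rss n) (orbit n y) = {}"
  show "Pmap n x \<noteq> Pmap n y"
  proof
    assume e: "Pmap n x = Pmap n y"
    have "zpt n (Pmap n x) \<in> zclosure_in n (mu0_rss n) (orbit n x)" by (rule closure_point[OF x])
    moreover have "zpt n (Pmap n x) \<in> zclosure_in n (mu0_rss n) (orbit n y)"
      unfolding e by (rule closure_point[OF y])
    ultimately show False using dis by blast
  qed
qed

end
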